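(* Let $\mu$ be a probability measure on $\mathbb{R}$, let $X_1,X_2,\dots$ be i.i.d. $2\times2$ random matrices whose entries are i.i.d. with law $\mu$, and $A_n=X_1X_2\cdots X_n$. Then for every $n\ge1$, $\Pr(A_n\text{ has all eigenvalues real})\ge\frac12$. *)

theory Defs
  imports "HOL-Probability.Probability"
begin

definition cmat :: "real^2^2 \<Rightarrow> complex^2^2" where
  "cmat A = (\<chi> i j. complex_of_real (A $ i $ j))"

definition is_eigenvalue :: "real^2^2 \<Rightarrow> complex \<Rightarrow> bool" where
  "is_eigenvalue A z \<longleftrightarrow> (\<exists>v :: complex^2. v \<noteq> 0 \<and> cmat A *v v = z *s v)"

definition all_eigenvalues_real :: "real^2^2 \<Rightarrow> bool" where
  "all_eigenvalues_real A \<longleftrightarrow> (\<forall>z. is_eigenvalue A z \<longrightarrow> Im z = 0)"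

fun mprod :: "(nat \<Rightarrow> real^2^2) \<Rightarrow> nat \<Rightarrow> real^2^2" where
  "mprod X 0 = mat 1"
| "mprod X (Suc n) = mprod X n ** X (Suc n)"

end

theory Submission
  imports Defs
begin


definition disc :: "real^2^2 \<Rightarrow> real" where
  "disc A = (A$1$1 - A$2$2)^2 + 4 * (A$1$2 * A$2$1)"

lemma eig_iff: "all_eigenvalues_real A \<longleftrightarrow> disc A \<ge> 0"
proof
  assume h: "all_eigenvalues_real A"
  show "disc A \<ge> 0"
  proof (rule ccontr)
    assume n: "\<not> disc A \<ge> 0"
    define a where "a = A$1$1" define b where "b = A$1$2"
    define c where "c = A$2$1" define d where "d = A$2$2"
    have dn: "(a-d)^2 + 4*(b*c) < 0" using n unfolding disc_def a_def b_def c_def d_def by simp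
    hence bc: "b*c < 0" by (smt (verit) zero_le_power2)
    hence b0: "b \<noteq> 0" by auto
    define s where "s = sqrt (-((a-d)^2 + 4*(b*c)))"
    have s2: "s^2 = -((a-d)^2 + 4*(b*c))" unfolding s_def using dn by simp
    have spos: "s > 0" unfolding s_def using dn by simp
    define z where "z = Complex ((a+d)/2) (s/2)"
    have zr: "z^2 - complex_of_real (a+d) * z + complex_of_real (a*d - b*c) = 0"
      unfolding z_def using s2 by (simp add: complex_eq_iff power2_eq_square field_simps)
    define v :: "complex^2" where "v = (\<chi> i. if i = 1 then complex_of_real b else z - complex_of_real a)"
    have "v \<noteq> 0" using b0 by (auto simp: v_def vec_eq_iff)
    moreover have "cmat A *v v = z *s v"
      unfolding vec_eq_iff forall_2
      using zr by (auto simp: v_def cmat_def matrix_vector_mult_def sum_2 a_def[symmetric] b_def[symmetric]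
          c_def[symmetric] d_def[symmetric] algebra_simps power2_eq_square)
    ultimately have "is_eigenvalue A z" unfolding is_eigenvalue_def by blast
    with h have "Im z = 0" unfolding all_eigenvalues_real_def by blast
    with spos show False by (simp add: z_def)
  qed
next
  assume dA: "disc A \<ge> 0"
  show "all_eigenvalues_real A" unfolding all_eigenvalues_real_def
  proof (intro allI impI)
    fix z assume "is_eigenvalue A z"
    then obtain v :: "complex^2" where v0: "v \<noteq> 0" and ev: "cmat A *v v = z *s v"
      unfolding is_eigenvalue_def by blast
    define a where "a = A$1$1" define b where "b = A$1$2"
    define c where "c = A$2$1" define d where "d = A$2$2"
    have e1: "(of_real a - z) * v$1 + of_real b * v$2 = 0"
      using ev[unfolded vec_eq_iff forall_2] by (simp add: cmat_def matrix_vector_mult_def sum_2 a_def b_def algebra_simps)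
    have e2: "of_real c * v$1 + (of_real d - z) * v$2 = 0"
      using ev[unfolded vec_eq_iff forall_2] by (simp add: cmat_def matrix_vector_mult_def sum_2 c_def d_def algebra_simps)
    have "((of_real a - z)*(of_real d - z) - of_real b * of_real c) * v$1 = 0"
    proof -
      have "((of_real a - z)*(of_real d - z) - of_real b * of_real c) * v$1
         = (of_real d - z) * ((of_real a - z) * v$1 + of_real b * v$2) - of_real b * (of_real c * v$1 + (of_real d - z) * v$2)"
        by (simp add: algebra_simps)
      thus ?thesis using e1 e2 by simp
    qed
    moreover have "((of_real a - z)*(of_real d - z) - of_real b * of_real c) * v$2 = 0"
    proof -
      have "((of_real a - z)*(of_real d - z) - of_real b * of_real c) * v$2
         = (of_real a - z) * (of_real c * v$1 + (of_real d - z) * v$2) - of_real c * ((of_real a - z) * v$1 + of_real b * v$2)"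
        by (simp add: algebra_simps)
      thus ?thesis using e1 e2 by simp
    qed
    moreover have "v$1 \<noteq> 0 \<or> v$2 \<noteq> 0" using v0 by (auto simp: vec_eq_iff forall_2)
    ultimately have ch: "(of_real a - z)*(of_real d - z) - of_real b * of_real c = (0::complex)" by auto
    define x where "x = Re z" define y where "y = Im z"
    have zz: "z = Complex x y" by (simp add: x_def y_def)
    have hh: "a * d + x * x = a * x + (b * c + (d * x + y * y)) \<and> x * (y * 2) = a * y + d * y"
      using ch unfolding zz by (simp add: complex_eq_iff algebra_simps power2_eq_square)
    have im: "y * (2*x - (a+d)) = 0" using hh by (simp add: algebra_simps)
    have re0: "(a-x)*(d-x) - y^2 - b*c = a*d + x*x - (a*x + (b*c + (d*x + y*y)))"
      unfolding power2_eq_square by algebra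
    have re: "(a-x)*(d-x) - y^2 - b*c = 0" using hh re0 by linarith
    have dd: "(a-d)^2 + 4*(b*c) \<ge> 0" using dA unfolding disc_def a_def b_def c_def d_def by simp
    show "Im z = 0"
    proof (rule ccontr)
      assume "Im z \<noteq> 0"
      hence "y \<noteq> 0" by (simp add: y_def)
      hence "x = (a+d)/2" using im by simp
      hence xx: "x = (a+d)/2" .
      have "y^2 = (a-x)*(d-x) - b*c" using re by simp
      also have "... = -((a-d)^2 + 4*(b*c))/4" unfolding xx by (simp add: field_simps power2_eq_square)
      finally have "y^2 = -((a-d)^2 + 4*(b*c))/4" .
      moreover have "y^2 > 0" using \<open>y \<noteq> 0\<close> by simp
      ultimately have "4*y^2 = -((a-d)^2 + 4*(b*c))" "y^2 > 0" by simp_all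
      thus False using dd by linarith
    qed
  qed
qed

definition rsw :: "real^2^2 \<Rightarrow> real^2^2" where
  "rsw A = (\<chi> i j. A $ (if i = 1 then 2 else 1) $ j)"

lemma key: "disc (A ** B) \<ge> 0 \<or> disc (rsw A ** B) \<ge> 0"
proof -
  have "disc (A ** B) + disc (rsw A ** B) =
     (A$1$1*B$1$1 + A$1$2*B$2$1 + A$2$1*B$1$2 + A$2$2*B$2$2)^2 + 
     (A$2$1*B$1$1 + A$2$2*B$2$1 + A$1$1*B$1$2 + A$1$2*B$2$2)^2"
    unfolding disc_def rsw_def by (simp add: matrix_matrix_mult_def sum_2 power2_eq_square algebra_simps)
  moreover have "... \<ge> 0" by simp
  ultimately show ?thesis by linarith
qed



definition sw2 :: "2 \<Rightarrow> 2" where "sw2 i = (if i = 1 then 2 else 1)"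
definition tt :: "nat\<times>2\<times>2 \<Rightarrow> nat\<times>2\<times>2" where
  "tt = (\<lambda>(k,i,j). if k = 1 then (k, sw2 i, j) else (k,i,j))"
definition Mk :: "(nat\<times>2\<times>2 \<Rightarrow> real) \<Rightarrow> nat \<Rightarrow> real^2^2" where
  "Mk x k = (\<chi> i j. x (k,i,j))"

lemma mprod_cong: "(\<And>k. 1 \<le> k \<Longrightarrow> k \<le> n \<Longrightarrow> X k = Y k) \<Longrightarrow> mprod X n = mprod Y n"
  by (induction n) auto

lemma mprod_split: "mprod X (Suc m) = X 1 ** mprod (\<lambda>k. X (Suc k)) m"
  by (induction m) (auto simp: matrix_mul_assoc)

lemma mprod_meas:
  assumes "\<And>k i j. 1 \<le> k \<Longrightarrow> k \<le> m \<Longrightarrow> (\<lambda>x. x (k,i,j)) \<in> borel_measurable N"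
  shows "(\<lambda>x. mprod (Mk x) m $ i $ j) \<in> borel_measurable N"
  using assms
proof (induction m arbitrary: i j)
  case 0
  then show ?case by (simp add: mat_def)
next
  case (Suc m)
  have h: "(\<lambda>x. mprod (Mk x) m $ i $ j) \<in> borel_measurable N" for i j
    using Suc by auto
  have h2: "(\<lambda>x. Mk x (Suc m) $ i $ j) \<in> borel_measurable N" for i j
    using Suc.prems[of "Suc m" i j] by (simp add: Mk_def)
  show ?case
    by (simp add: matrix_matrix_mult_def sum_2) (intro borel_measurable_add borel_measurable_times h h2)
qed

lemma sw2_inj: "sw2 (sw2 i) = i"
  using exhaust_2[of i] by (auto simp: sw2_def)

lemma tt_inv: "tt (tt p) = p"
  by (cases p) (auto simp: tt_def sw2_inj)

theorem mainTheorem20: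
  fixes M :: "'a measure" and \<mu> :: "real measure"
    and X :: "nat \<Rightarrow> 'a \<Rightarrow> real^2^2" and n :: nat
  assumes "prob_space M"
    and "prob_space \<mu>" and "sets \<mu> = sets borel"
    and "prob_space.indep_vars M (\<lambda>_. borel) (\<lambda>(k, i, j) \<omega>. X k \<omega> $ i $ j) ({1::nat..} \<times> UNIV \<times> UNIV)"
    and "\<And>k i j. k \<ge> 1 \<Longrightarrow> distr M borel (\<lambda>\<omega>. X k \<omega> $ i $ j) = \<mu>"
    and "n \<ge> 1"
  shows "measure M {\<omega> \<in> space M. all_eigenvalues_real (mprod (\<lambda>k. X k \<omega>) n)} \<ge> 1 / 2"
proof -
  interpret P: prob_space M by fact
  define I :: "(nat\<times>2\<times>2) set" where "I = {1..n} \<times> UNIV \<times> UNIV"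
  define Xf :: "nat\<times>2\<times>2 \<Rightarrow> 'a \<Rightarrow> real" where "Xf = (\<lambda>(k, i, j) \<omega>. X k \<omega> $ i $ j)"
  have I0: "I \<noteq> {}" using assms(6) by (auto simp: I_def)
  have Isub: "I \<subseteq> {1::nat..} \<times> UNIV \<times> UNIV" by (auto simp: I_def)
  have ind: "P.indep_vars (\<lambda>_. borel) Xf I"
    using P.indep_vars_subset[OF assms(4)[folded Xf_def] Isub] .
  have rv: "\<And>p. p \<in> I \<Longrightarrow> Xf p \<in> borel_measurable M"
    using ind unfolding P.indep_vars_def by blast
  define Y where "Y = (\<lambda>\<omega>. \<lambda>p\<in>I. Xf p \<omega>)"
  define Q where "Q = PiM I (\<lambda>_. \<mu>)"
  have sQ: "sets (PiM I (\<lambda>_. borel)) = sets Q"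
    unfolding Q_def by (intro sets_PiM_cong) (auto simp: assms(3))
  have dY: "distr M (PiM I (\<lambda>_. borel)) Y = PiM I (\<lambda>p. distr M borel (Xf p))"
    unfolding Y_def using P.indep_vars_iff_distr_eq_PiM'[where M'="\<lambda>_. borel" and X=Xf, OF I0 rv] ind by simp
  also have "\<dots> = Q" unfolding Q_def
    by (intro PiM_cong refl) (auto simp: I_def Xf_def assms(5))
  finally have dY': "distr M (PiM I (\<lambda>_. borel)) Y = Q" .
  have Ymeas: "Y \<in> measurable M (PiM I (\<lambda>_. borel))"
    unfolding Y_def by (intro measurable_restrict rv)
  hence YmeasQ: "Y \<in> measurable M Q" using measurable_cong_sets[OF refl sQ] by blast
  have dQ: "distr M Q Y = Q"
  proof -
    have "distr M Q Y = distr M (PiM I (\<lambda>_. borel)) Y" by (rule distr_cong) (use sQ in auto)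
    thus ?thesis using dY' by simp
  qed
  have Qprob: "prob_space Q" unfolding Q_def by (intro prob_space_PiM assms(2))
  interpret Qp: prob_space Q by fact
  have coord: "(\<lambda>x. x p) \<in> borel_measurable Q" if "p \<in> I" for p
  proof -
    have "(\<lambda>x. x p) \<in> measurable Q \<mu>" unfolding Q_def by (rule measurable_component_singleton[OF that])
    thus ?thesis using measurable_cong_sets[OF refl assms(3)] by blast
  qed
  define E where "E = {x \<in> space Q. 0 \<le> disc (mprod (Mk x) n)}"
  have gm: "(\<lambda>x. disc (mprod (Mk x) n)) \<in> borel_measurable Q"
  proof -
    have "(\<lambda>x. mprod (Mk x) n $ i $ j) \<in> borel_measurable Q" for i j
      by (rule mprod_meas) (rule coord, auto simp: I_def)
    thus ?thesis unfolding disc_def by measurable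
  qed
  have Es: "E \<in> sets Q" unfolding E_def using gm by measurable
  have set_eq: "{\<omega> \<in> space M. all_eigenvalues_real (mprod (\<lambda>k. X k \<omega>) n)} = Y -` E \<inter> space M"
  proof -
    have "mprod (Mk (Y \<omega>)) n = mprod (\<lambda>k. X k \<omega>) n" for \<omega>
      by (rule mprod_cong) (auto simp: Mk_def Y_def Xf_def I_def vec_eq_iff)
    moreover have "\<omega> \<in> space M \<Longrightarrow> Y \<omega> \<in> space Q" for \<omega>
      using YmeasQ by (auto dest: measurable_space)
    ultimately show ?thesis unfolding E_def by (auto simp: eig_iff)
  qed
  have mE: "measure M {\<omega> \<in> space M. all_eigenvalues_real (mprod (\<lambda>k. X k \<omega>) n)} = measure Q E"
    unfolding set_eq using measure_distr[OF YmeasQ Es] dQ by simp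
  define T :: "(nat\<times>2\<times>2 \<Rightarrow> real) \<Rightarrow> _" where "T = (\<lambda>x. \<lambda>p\<in>I. x (tt p))"
  have ttI: "tt \<in> I \<rightarrow> I" by (auto simp: tt_def I_def split: prod.splits)
  have ttinj: "inj_on tt I" by (metis inj_on_inverseI tt_inv)
  have dT: "distr Q Q T = Q"
    unfolding Q_def T_def using distr_PiM_reindex[of I "\<lambda>_. \<mu>", OF assms(2) ttinj ttI] by simp
  have Tmeas: "T \<in> measurable Q Q"
    unfolding T_def Q_def using ttI by (intro measurable_restrict measurable_component_singleton) auto
  define F where "F = T -` E \<inter> space Q"
  have Fs: "F \<in> sets Q" unfolding F_def using Tmeas Es by measurable
  have mF: "measure Q F = measure Q E"
    unfolding F_def using measure_distr[OF Tmeas Es] dT by simp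
  have cover: "space Q \<subseteq> E \<union> F"
  proof
    fix x assume x: "x \<in> space Q"
    have Tx: "T x \<in> space Q" using Tmeas x by (auto dest: measurable_space)
    obtain m where nm: "n = Suc m" using assms(6) by (cases n) auto
    have A: "mprod (Mk x) n = Mk x 1 ** mprod (\<lambda>k. Mk x (Suc k)) m"
      unfolding nm by (rule mprod_split)
    have B: "mprod (Mk (T x)) n = Mk (T x) 1 ** mprod (\<lambda>k. Mk (T x) (Suc k)) m"
      unfolding nm by (rule mprod_split)
    have C: "Mk (T x) 1 = rsw (Mk x 1)"
      using assms(6) by (auto simp: Mk_def rsw_def T_def I_def tt_def sw2_def vec_eq_iff)
    have D: "mprod (\<lambda>k. Mk (T x) (Suc k)) m = mprod (\<lambda>k. Mk x (Suc k)) m"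
      by (rule mprod_cong) (auto simp: Mk_def T_def I_def tt_def nm vec_eq_iff)
    have "0 \<le> disc (mprod (Mk x) n) \<or> 0 \<le> disc (mprod (Mk (T x)) n)"
      unfolding A B C D by (rule key)
    thus "x \<in> E \<union> F" using x Tx by (auto simp: E_def F_def)
  qed
  have "1 = measure Q (space Q)" using Qp.prob_space by simp
  also have "\<dots> \<le> measure Q (E \<union> F)"
    using cover Es Fs by (intro Qp.finite_measure_mono) auto
  also have "\<dots> \<le> measure Q E + measure Q F"
    using Es Fs by (rule measure_Un_le)
  finally show ?thesis using mE mF by simp
qed

end
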